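(* Let $d=1$, constants $0<c_1<1$, $c_2,c_3>0$, and $C^1$ functions $b_1:\mathbb R^2\to\mathbb R$, $b_2,f_1:\mathbb R\to\mathbb R$. Let $$b(x,a,\mathcal L_{(\xi,\alpha)})=-a+b_1(\mathbb E[\xi],\mathbb E[\alpha])+b_2(x),\quad f(x,a,\mathcal L_{(\xi,\alpha)})=\tfrac{|a|^2}{2}-c_1a\,\mathbb E[\alpha]+c_2x\,\mathbb E[\xi]+c_3x\,\mathbb E[\alpha]+f_1(x).$$ Set $\hat c_1:=\frac{c_1}{1-c_1}$, $\bar c_1:=\frac1{1-c_1}$, $\hat c_3:=\frac{c_3}{1-c_1}$, and assume that for all $(m_1,m_2)\in\mathbb R^2$ the symmetric matrix $$\begin{bmatrix}1-[\bar c_1\partial_{m_2}b_1-\hat c_1]&0&\frac12[\hat c_3-\partial_{m_1}b_1]\\0&\bar c_1\partial_{m_2}b_1-\hat c_1&\frac12[\hat c_3+\partial_{m_1}b_1]\\\frac12[\hat c_3-\partial_{m_1}b_1]&\frac12[\hat c_3+\partial_{m_1}b_1]&c_2\end{bmatrix}$$ (derivatives of $b_1$ evaluated at $(m_1,m_2)$) is positive semidefinite. Then Assumption (F) holds with $\Phi(\mathcal L_{(\xi,\eta)})=\mathcal L_{(\xi,\hat c_1\mathbb E[\eta]+\eta)}$, and $$\widehat H(x,p,\mathcal L_{(\xi,\eta)})=-\tfrac12|\hat c_1\mathbb E[\eta]+p|^2+p[b_1(\mathbb E[\xi],\bar c_1\mathbb E[\eta])+b_2(x)]+c_2x\mathbb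 E[\xi]+\hat c_3x\mathbb E[\eta]+f_1(x)$$ satisfies condition (LL-H): for all $\xi,\eta,\gamma,\zeta\in L^2(\mathcal F^1_T)$ and Lipschitz $\varphi$, $$\tilde{\mathbb E}\Big[\langle\zeta,\widehat H_{pp}(\xi)\zeta\rangle-\big\langle\eta,\widehat H_{x\rho_1}(\xi,\tilde\xi)\tilde\eta+\widehat H_{x\rho_2}(\xi,\tilde\xi)[\tilde\gamma+\tilde\zeta]\big\rangle-\big\langle\gamma-\zeta,\widehat H_{p\rho_1}(\xi,\tilde\xi)\tilde\eta+\widehat H_{p\rho_2}(\xi,\tilde\xi)[\tilde\gamma+\tilde\zeta]\big\rangle\Big]\le0.$$
   Context: Hamiltonian $H(x,p,\nu):=\inf_a[p\,b(x,a,\nu)+f(x,a,\nu)]$. Assumption (F): (i) unique minimizer $\phi(x,p,\nu)$; (ii) for all $\xi\in L^2(\mathcal F)$, $\eta\in L^2(\sigma(\xi))$ the map $\nu\mapsto\mathcal L_{(\xi,\phi(\xi,\eta,\nu))}$ has a unique fixed point $\Phi(\mathcal L_{(\xi,\eta)})$. $\widehat H(x,p,\rho):=H(x,p,\Phi(\rho))$; $\partial_{\rho_1},\partial_{\rho_2}$ are the components of the Lions derivative in $\rho\in\mathcal P_2(\mathbb R^2)$ at a point $(\tilde x,\tilde p)$ w.r.t. $\tilde x$ and $\tilde p$. Shorthand: with $\rho:=\mathcal L_{(\xi,\varphi(\xi))}$, $\widehat H_{pp}(x):=\partial_{pp}\widehat H(x,\varphi(x),\rho)$, $\widehat H_{a\rho_i}(x,\tilde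 x):=\partial_a\partial_{\rho_i}\widehat H(x,\varphi(x),\rho,\tilde x,\varphi(\tilde x))$ for $a\in\{x,p\}$. $\tilde\xi$ etc. denote independent copies on an extended probability space and $\tilde{\mathbb E}$ the expectation there; $\mathcal F^1_T$ is the $\sigma$-algebra of the idiosyncratic probability space (atomless). *)

theory Defs
  imports "HOL-Probability.Probability"
begin

definition L2 :: "'w measure \<Rightarrow> ('w \<Rightarrow> real) \<Rightarrow> bool" where
  "L2 M X \<longleftrightarrow> X \<in> borel_measurable M \<and> integrable M (\<lambda>\<omega>. (X \<omega>)\<^sup>2)"

definition L2_sigma :: "'w measure \<Rightarrow> ('w \<Rightarrow> real) \<Rightarrow> ('w \<Rightarrow> real) \<Rightarrow> bool" where
  "L2_sigma M \<xi> \<eta> \<longleftrightarrow> L2 M \<eta> \<and> \<eta> \<in> borel_measurable (vimage_algebra (space M) \<xi> borel)"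

definition L2v :: "'w measure \<Rightarrow> ('w \<Rightarrow> real \<times> real) \<Rightarrow> bool" where
  "L2v M X \<longleftrightarrow> X \<in> borel_measurable M \<and> integrable M (\<lambda>\<omega>. (norm (X \<omega>))\<^sup>2)"

definition L2norm :: "'w measure \<Rightarrow> ('w \<Rightarrow> real \<times> real) \<Rightarrow> real" where
  "L2norm M X = sqrt (integral\<^sup>L M (\<lambda>\<omega>. (norm (X \<omega>))\<^sup>2))"

definition P2 :: "(real \<times> real) measure \<Rightarrow> bool" where
  "P2 \<nu> \<longleftrightarrow> prob_space \<nu> \<and> sets \<nu> = sets borel \<and> integrable \<nu> (\<lambda>z. (norm z)\<^sup>2)"

definition law :: "'w measure \<Rightarrow> ('w \<Rightarrow> real \<times> real) \<Rightarrow> (real \<times> real) measure" where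
  "law M X = distr M borel X"

definition mean1 :: "(real \<times> real) measure \<Rightarrow> real" where
  "mean1 \<nu> = integral\<^sup>L \<nu> fst"
definition mean2 :: "(real \<times> real) measure \<Rightarrow> real" where
  "mean2 \<nu> = integral\<^sup>L \<nu> snd"

definition atomless :: "'w measure \<Rightarrow> bool" where
  "atomless M \<longleftrightarrow> (\<forall>A\<in>sets M. 0 < measure M A \<longrightarrow>
      (\<exists>B\<in>sets M. B \<subseteq> A \<and> 0 < measure M B \<and> measure M B < measure M A))"

text \<open>g is a Lions derivative of U at rho (computed on the atomless space M):
  the lift X \<mapsto> U(law X) is Frechet differentiable on L^2(M;R^2) at every X with law rho,
  with derivative Y \<mapsto> E[g(X) . Y].\<close>
definition lions_deriv :: "'w measure \<Rightarrow> ((real \<times> real) measure \<Rightarrow> real) \<Rightarrow> (real \<times> real) measure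
    \<Rightarrow> (real \<times> real \<Rightarrow> real \<times> real) \<Rightarrow> bool" where
  "lions_deriv M U \<rho> g \<longleftrightarrow> g \<in> borel_measurable borel \<and> integrable \<rho> (\<lambda>z. (norm (g z))\<^sup>2) \<and>
     (\<forall>X. L2v M X \<and> law M X = \<rho> \<longrightarrow>
        (\<forall>\<epsilon>>0. \<exists>\<delta>>0. \<forall>Y. L2v M Y \<and> L2norm M Y < \<delta> \<longrightarrow>
            \<bar>U (law M (\<lambda>\<omega>. X \<omega> + Y \<omega>)) - U \<rho> - integral\<^sup>L M (\<lambda>\<omega>. g (X \<omega>) \<bullet> Y \<omega>)\<bar>
              \<le> \<epsilon> * L2norm M Y))"

type_synonym coeff = "real \<Rightarrow> real \<Rightarrow> (real \<times> real) measure \<Rightarrow> real"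

definition Ham :: "coeff \<Rightarrow> coeff \<Rightarrow> real \<Rightarrow> real \<Rightarrow> (real \<times> real) measure \<Rightarrow> real" where
  "Ham b f x p \<nu> = (INF a. p * b x a \<nu> + f x a \<nu>)"

definition is_minimizer :: "coeff \<Rightarrow> coeff \<Rightarrow> real \<Rightarrow> real \<Rightarrow> (real \<times> real) measure \<Rightarrow> real \<Rightarrow> bool" where
  "is_minimizer b f x p \<nu> a \<longleftrightarrow> (\<forall>a'. p * b x a \<nu> + f x a \<nu> \<le> p * b x a' \<nu> + f x a' \<nu>)"

definition minimizer :: "coeff \<Rightarrow> coeff \<Rightarrow> real \<Rightarrow> real \<Rightarrow> (real \<times> real) measure \<Rightarrow> real" where
  "minimizer b f x p \<nu> = (THE a. is_minimizer b f x p \<nu> a)"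

definition is_fixed_point :: "'w measure \<Rightarrow> coeff \<Rightarrow> coeff \<Rightarrow> ('w \<Rightarrow> real) \<Rightarrow> ('w \<Rightarrow> real)
    \<Rightarrow> (real \<times> real) measure \<Rightarrow> bool" where
  "is_fixed_point M b f \<xi> \<eta> \<nu> \<longleftrightarrow>
     P2 \<nu> \<and> \<nu> = law M (\<lambda>\<omega>. (\<xi> \<omega>, minimizer b f (\<xi> \<omega>) (\<eta> \<omega>) \<nu>))"

definition assumption_F :: "'w measure \<Rightarrow> coeff \<Rightarrow> coeff \<Rightarrow> bool" where
  "assumption_F M b f \<longleftrightarrow>
     (\<forall>x p \<nu>. P2 \<nu> \<longrightarrow> (\<exists>!a. is_minimizer b f x p \<nu> a)) \<and>
     (\<forall>\<xi> \<eta>. L2 M \<xi> \<and> L2_sigma M \<xi> \<eta> \<longrightarrow> (\<exists>!\<nu>. is_fixed_point M b f \<xi> \<eta> \<nu>))"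

definition PhiF :: "'w measure \<Rightarrow> coeff \<Rightarrow> coeff \<Rightarrow> ('w \<Rightarrow> real) \<Rightarrow> ('w \<Rightarrow> real) \<Rightarrow> (real \<times> real) measure" where
  "PhiF M b f \<xi> \<eta> = (THE \<nu>. is_fixed_point M b f \<xi> \<eta> \<nu>)"

text \<open>Admissible versions DH of the Lions derivative of Hh(x,p,.) at rho: for every (x,p),
  DH x p is a Lions derivative; DH is jointly Borel in (x,p,x~,p~) and differentiable in x and in p.
  The two components of DH x p y are the derivatives w.r.t. x~ (rho_1) and p~ (rho_2).\<close>
definition admissible_LD :: "'w measure \<Rightarrow> (real \<Rightarrow> real \<Rightarrow> (real \<times> real) measure \<Rightarrow> real)
    \<Rightarrow> (real \<times> real) measure \<Rightarrow> (real \<Rightarrow> real \<Rightarrow> real \<times> real \<Rightarrow> real \<times> real) \<Rightarrow> bool" where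
  "admissible_LD M Hh \<rho> DH \<longleftrightarrow>
     (\<forall>x p. lions_deriv M (Hh x p) \<rho> (DH x p)) \<and>
     (\<lambda>(x, p, y). DH x p y) \<in> borel_measurable borel \<and>
     (\<forall>x p y. (\<lambda>x'. DH x' p y) differentiable (at x) \<and> (\<lambda>p'. DH x p' y) differentiable (at p))"

definition LLH :: "'w measure \<Rightarrow> (real \<Rightarrow> real \<Rightarrow> (real \<times> real) measure \<Rightarrow> real) \<Rightarrow> bool" where
  "LLH M Hh \<longleftrightarrow>
     (\<forall>\<xi> \<eta> \<gamma> \<zeta> (\<phi>::real \<Rightarrow> real).
        L2 M \<xi> \<and> L2 M \<eta> \<and> L2 M \<gamma> \<and> L2 M \<zeta> \<and> (\<exists>K. K-lipschitz_on UNIV \<phi>) \<longrightarrow>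
        (let \<rho> = law M (\<lambda>\<omega>. (\<xi> \<omega>, \<phi> (\<xi> \<omega>))) in
          (\<exists>DH. admissible_LD M Hh \<rho> DH) \<and>
          (\<forall>DH. admissible_LD M Hh \<rho> DH \<longrightarrow>
             integral\<^sup>L (M \<Otimes>\<^sub>M M) (\<lambda>(\<omega>, \<omega>').
               (let x = \<xi> \<omega>; p = \<phi> x; y' = (\<xi> \<omega>', \<phi> (\<xi> \<omega>'));
                    Hpp = deriv (deriv (\<lambda>p'. Hh x p' \<rho>)) p;
                    Hxr1 = deriv (\<lambda>x'. fst (DH x' p y')) x;
                    Hxr2 = deriv (\<lambda>x'. snd (DH x' p y')) x;
                    Hpr1 = deriv (\<lambda>p'. fst (DH x p' y')) p;
                    Hpr2 = deriv (\<lambda>p'. snd (DH x p' y')) p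
                in \<zeta> \<omega> * Hpp * \<zeta> \<omega>
                   - \<eta> \<omega> * (Hxr1 * \<eta> \<omega>' + Hxr2 * (\<gamma> \<omega>' + \<zeta> \<omega>'))
                   - (\<gamma> \<omega> - \<zeta> \<omega>) * (Hpr1 * \<eta> \<omega>' + Hpr2 * (\<gamma> \<omega>' + \<zeta> \<omega>')))) \<le> 0)))"

definition bEx :: "(real \<times> real \<Rightarrow> real) \<Rightarrow> (real \<Rightarrow> real) \<Rightarrow> coeff" where
  "bEx b1 b2 x a \<nu> = - a + b1 (mean1 \<nu>, mean2 \<nu>) + b2 x"

definition fEx :: "real \<Rightarrow> real \<Rightarrow> real \<Rightarrow> (real \<Rightarrow> real) \<Rightarrow> coeff" where
  "fEx c1 c2 c3 f1 x a \<nu> = \<bar>a\<bar>\<^sup>2 / 2 - c1 * a * mean2 \<nu> + c2 * x * mean1 \<nu> + c3 * x * mean2 \<nu> + f1 x"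

definition HhatEx :: "real \<Rightarrow> real \<Rightarrow> real \<Rightarrow> (real \<times> real \<Rightarrow> real) \<Rightarrow> (real \<Rightarrow> real) \<Rightarrow> (real \<Rightarrow> real)
    \<Rightarrow> real \<Rightarrow> real \<Rightarrow> (real \<times> real) measure \<Rightarrow> real" where
  "HhatEx c1 c2 c3 b1 b2 f1 x p \<rho> =
     (let ch1 = c1 / (1 - c1); cb1 = 1 / (1 - c1); ch3 = c3 / (1 - c1) in
      - (1/2) * \<bar>ch1 * mean2 \<rho> + p\<bar>\<^sup>2 + p * (b1 (mean1 \<rho>, cb1 * mean2 \<rho>) + b2 x)
      + c2 * x * mean1 \<rho> + ch3 * x * mean2 \<rho> + f1 x)"

definition psd3 :: "real^3^3 \<Rightarrow> bool" where
  "psd3 A \<longleftrightarrow> (\<forall>v. 0 \<le> v \<bullet> (A *v v))"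

definition matEx :: "real \<Rightarrow> real \<Rightarrow> real \<Rightarrow> real \<Rightarrow> real \<Rightarrow> real^3^3" where
  "matEx c1 c2 c3 D1 D2 =
     (let ch1 = c1 / (1 - c1); cb1 = 1 / (1 - c1); ch3 = c3 / (1 - c1) in
      vector [vector [1 - (cb1 * D2 - ch1), 0, (ch3 - D1) / 2],
              vector [0, cb1 * D2 - ch1, (ch3 + D1) / 2],
              vector [(ch3 - D1) / 2, (ch3 + D1) / 2, c2]])"

end

theory Submission
  imports Defs
begin

lemma prod_integral:
  fixes f g :: "'w \<Rightarrow> real"
  assumes M: "prob_space M" and f: "integrable M f" and g: "integrable M g"
  shows "integrable (M \<Otimes>\<^sub>M M) (\<lambda>z. f (fst z) * g (snd z))"
    and "integral\<^sup>L (M \<Otimes>\<^sub>M M) (\<lambda>z. f (fst z) * g (snd z)) = integral\<^sup>L M f * integral\<^sup>L M g"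
proof -
  interpret P: pair_prob_space M M using M by (simp add: pair_prob_space_def pair_sigma_finite_def prob_space_imp_sigma_finite)
  have [measurable]: "f \<in> borel_measurable M" "g \<in> borel_measurable M" using f g by auto
  show I: "integrable (M \<Otimes>\<^sub>M M) (\<lambda>z. f (fst z) * g (snd z))"
  proof (rule P.Fubini_integrable)
    show "integrable M (\<lambda>x. \<integral> y. norm (f (fst (x, y)) * g (snd (x, y))) \<partial>M)"
      using f by (simp add: abs_mult)
    show "AE x in M. integrable M (\<lambda>y. f (fst (x, y)) * g (snd (x, y)))"
      using g by simp
  qed measurable
  have "integral\<^sup>L (M \<Otimes>\<^sub>M M) (\<lambda>z. f (fst z) * g (snd z)) = (\<integral>x. (\<integral>y. f x * g y \<partial>M) \<partial>M)"
    using P.integral_fst'[OF I] by simp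
  also have "\<dots> = integral\<^sup>L M f * integral\<^sup>L M g" by simp
  finally show "integral\<^sup>L (M \<Otimes>\<^sub>M M) (\<lambda>z. f (fst z) * g (snd z)) = integral\<^sup>L M f * integral\<^sup>L M g" .
qed

lemma obj_eq:
  "p * bEx b1 b2 x a \<nu> + fEx c1 c2 c3 f1 x a \<nu> =
   (p * bEx b1 b2 x (p + c1 * mean2 \<nu>) \<nu> + fEx c1 c2 c3 f1 x (p + c1 * mean2 \<nu>) \<nu>) + (a - (p + c1 * mean2 \<nu>))\<^sup>2 / 2"
  unfolding bEx_def fEx_def by (simp add: power2_eq_square field_simps)

lemma is_min_iff:
  "is_minimizer (bEx b1 b2) (fEx c1 c2 c3 f1) x p \<nu> a \<longleftrightarrow> a = p + c1 * mean2 \<nu>"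
proof
  assume "is_minimizer (bEx b1 b2) (fEx c1 c2 c3 f1) x p \<nu> a"
  then have "p * bEx b1 b2 x a \<nu> + fEx c1 c2 c3 f1 x a \<nu> \<le> p * bEx b1 b2 x (p + c1 * mean2 \<nu>) \<nu> + fEx c1 c2 c3 f1 x (p + c1 * mean2 \<nu>) \<nu>"
    unfolding is_minimizer_def by blast
  then have "(a - (p + c1 * mean2 \<nu>))\<^sup>2 \<le> 0"
    by (subst (asm) obj_eq) simp
  then show "a = p + c1 * mean2 \<nu>" by simp
next
  assume "a = p + c1 * mean2 \<nu>"
  then show "is_minimizer (bEx b1 b2) (fEx c1 c2 c3 f1) x p \<nu> a"
    unfolding is_minimizer_def
    by (intro allI, subst (2) obj_eq) simp
qed

lemma minimizer_eq: "minimizer (bEx b1 b2) (fEx c1 c2 c3 f1) x p \<nu> = p + c1 * mean2 \<nu>"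
  unfolding minimizer_def is_min_iff by simp

lemma Ham_eq:
  "Ham (bEx b1 b2) (fEx c1 c2 c3 f1) x p \<nu> =
     p * bEx b1 b2 x (p + c1 * mean2 \<nu>) \<nu> + fEx c1 c2 c3 f1 x (p + c1 * mean2 \<nu>) \<nu>"
  unfolding Ham_def
  apply (rule cInf_eq_minimum)
   apply blast
  apply clarsimp
  apply (subst (2) obj_eq)
  apply simp
  done

lemma L2_meas: "L2 M X \<Longrightarrow> X \<in> borel_measurable M" unfolding L2_def by simp

lemma L2_int: "prob_space M \<Longrightarrow> L2 M X \<Longrightarrow> integrable M X"
  unfolding L2_def by (rule finite_measure.square_integrable_imp_integrable[OF prob_space.finite_measure]) auto

lemma fst_borel: "fst \<in> borel_measurable (borel :: ('a::second_countable_topology \<times> 'b::second_countable_topology) measure)"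
  by (subst borel_prod[symmetric]) (rule measurable_fst)
lemma snd_borel: "snd \<in> borel_measurable (borel :: ('a::second_countable_topology \<times> 'b::second_countable_topology) measure)"
  by (subst borel_prod[symmetric]) (rule measurable_snd)

lemma L2_sq: "L2 M X \<Longrightarrow> integrable M (\<lambda>\<omega>. (X \<omega>)\<^sup>2)" unfolding L2_def by simp

lemma L2_affine: assumes "prob_space M" "L2 M X" shows "L2 M (\<lambda>\<omega>. c + X \<omega>)"
proof -
  interpret prob_space M by fact
  have i: "integrable M X" using L2_int assms by blast
  have "integrable M (\<lambda>\<omega>. c\<^sup>2 + 2 * c * X \<omega> + (X \<omega>)\<^sup>2)"
    using i L2_sq[OF assms(2)] by auto
  moreover have "(\<lambda>\<omega>. (c + X \<omega>)\<^sup>2) = (\<lambda>\<omega>. c\<^sup>2 + 2 * c * X \<omega> + (X \<omega>)\<^sup>2)"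
    by (simp add: power2_sum algebra_simps)
  ultimately show ?thesis using assms(2) unfolding L2_def by (auto intro: borel_measurable_add)
qed

lemma mean1_law: "X \<in> borel_measurable M \<Longrightarrow> Y \<in> borel_measurable M \<Longrightarrow> mean1 (law M (\<lambda>\<omega>. (X \<omega>, Y \<omega>))) = integral\<^sup>L M X"
  unfolding mean1_def law_def by (subst integral_distr) (auto intro: fst_borel)

lemma mean2_law: "X \<in> borel_measurable M \<Longrightarrow> Y \<in> borel_measurable M \<Longrightarrow> mean2 (law M (\<lambda>\<omega>. (X \<omega>, Y \<omega>))) = integral\<^sup>L M Y"
  unfolding mean2_def law_def by (subst integral_distr) (auto intro: snd_borel)

lemma P2_law: assumes "prob_space M" "L2 M X" "L2 M Y" shows "P2 (law M (\<lambda>\<omega>. (X \<omega>, Y \<omega>)))"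
proof -
  have [measurable]: "X \<in> borel_measurable M" "Y \<in> borel_measurable M" using assms L2_meas by auto
  have "integrable M (\<lambda>\<omega>. (X \<omega>)\<^sup>2 + (Y \<omega>)\<^sup>2)" using L2_sq[OF assms(2)] L2_sq[OF assms(3)] by (rule Bochner_Integration.integrable_add)
  then have "integrable M (\<lambda>\<omega>. (norm (X \<omega>, Y \<omega>))\<^sup>2)" by (simp add: norm_Pair)
  then show ?thesis unfolding P2_def law_def
    by (auto intro!: prob_space.prob_space_distr assms(1) simp: integrable_distr_eq)
qed

lemma fixed_point:
  fixes \<xi> \<eta> :: "'w \<Rightarrow> real"
  assumes M: "prob_space M" and c1: "0 < c1" "c1 < 1" and L: "L2 M \<xi>" "L2 M \<eta>"
  shows "is_fixed_point M (bEx b1 b2) (fEx c1 c2 c3 f1) \<xi> \<eta> \<nu> \<longleftrightarrow>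
     \<nu> = law M (\<lambda>\<omega>. (\<xi> \<omega>, c1 / (1 - c1) * integral\<^sup>L M \<eta> + \<eta> \<omega>))"
proof -
  interpret prob_space M by fact
  have [measurable]: "\<xi> \<in> borel_measurable M" "\<eta> \<in> borel_measurable M" using L L2_meas by auto
  have ie: "integrable M \<eta>" using L2_int M L by blast
  let ?E = "integral\<^sup>L M \<eta>"
  have m2: "mean2 (law M (\<lambda>\<omega>. (\<xi> \<omega>, c + \<eta> \<omega>))) = c + ?E" for c
    by (subst mean2_law) (auto simp: ie prob_space)
  show ?thesis
  proof
    assume "is_fixed_point M (bEx b1 b2) (fEx c1 c2 c3 f1) \<xi> \<eta> \<nu>"
    then have nu: "\<nu> = law M (\<lambda>\<omega>. (\<xi> \<omega>, \<eta> \<omega> + c1 * mean2 \<nu>))"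
      unfolding is_fixed_point_def minimizer_eq by blast
    have "mean2 \<nu> = mean2 (law M (\<lambda>\<omega>. (\<xi> \<omega>, \<eta> \<omega> + c1 * mean2 \<nu>)))"
      by (rule arg_cong[OF nu])
    also have "\<dots> = c1 * mean2 \<nu> + ?E" using m2[of "c1 * mean2 \<nu>"] by (simp add: add.commute)
    finally have "(1 - c1) * mean2 \<nu> = ?E" by (simp add: algebra_simps)
    then have "mean2 \<nu> = ?E / (1 - c1)" using c1 by (simp add: field_simps)
    then have eq: "c1 * mean2 \<nu> = c1 / (1 - c1) * ?E" by simp
    show "\<nu> = law M (\<lambda>\<omega>. (\<xi> \<omega>, c1 / (1 - c1) * ?E + \<eta> \<omega>))"
      apply (subst nu)
      apply (simp only: eq add.commute)
      done
  next
    define \<nu>0 where "\<nu>0 = law M (\<lambda>\<omega>. (\<xi> \<omega>, c1 / (1 - c1) * ?E + \<eta> \<omega>))"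
    assume nu: "\<nu> = law M (\<lambda>\<omega>. (\<xi> \<omega>, c1 / (1 - c1) * ?E + \<eta> \<omega>))"
    then have nu': "\<nu> = \<nu>0" unfolding \<nu>0_def .
    have "P2 \<nu>0" unfolding \<nu>0_def by (rule P2_law[OF M L(1) L2_affine[OF M L(2)]])
    moreover have "c1 * mean2 \<nu>0 = c1 / (1 - c1) * ?E"
      unfolding \<nu>0_def m2 using c1 by (simp add: field_simps)
    moreover have "\<nu>0 = law M (\<lambda>\<omega>. (\<xi> \<omega>, \<eta> \<omega> + c1 * mean2 \<nu>0))"
      by (subst calculation(2)) (simp add: \<nu>0_def add.commute)
    ultimately show "is_fixed_point M (bEx b1 b2) (fEx c1 c2 c3 f1) \<xi> \<eta> \<nu>"
      unfolding is_fixed_point_def minimizer_eq nu' by simp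
  qed
qed

lemma Ham_Phi:
  fixes \<xi> \<eta> :: "'w \<Rightarrow> real"
  assumes M: "prob_space M" and c1: "0 < c1" "c1 < 1" and L: "L2 M \<xi>" "L2 M \<eta>"
  shows "Ham (bEx b1 b2) (fEx c1 c2 c3 f1) x p (law M (\<lambda>\<omega>. (\<xi> \<omega>, c1 / (1 - c1) * integral\<^sup>L M \<eta> + \<eta> \<omega>)))
       = HhatEx c1 c2 c3 b1 b2 f1 x p (law M (\<lambda>\<omega>. (\<xi> \<omega>, \<eta> \<omega>)))"
proof -
  interpret prob_space M by fact
  have [measurable]: "\<xi> \<in> borel_measurable M" "\<eta> \<in> borel_measurable M" using L L2_meas by auto
  have ie: "integrable M \<eta>" using L2_int M L by blast
  let ?E = "integral\<^sup>L M \<eta>"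
  let ?n = "law M (\<lambda>\<omega>. (\<xi> \<omega>, c1 / (1 - c1) * ?E + \<eta> \<omega>))"
  have m1: "mean1 ?n = integral\<^sup>L M \<xi>" by (subst mean1_law) auto
  have m2: "mean2 ?n = c1 / (1 - c1) * ?E + ?E"
    by (subst mean2_law) (auto simp: ie prob_space)
  have m2': "mean2 ?n = 1 / (1 - c1) * ?E" unfolding m2 using c1 by (simp add: field_simps)
  have c: "c1 * mean2 ?n = c1 / (1 - c1) * ?E" unfolding m2' by simp
  have l1: "mean1 (law M (\<lambda>\<omega>. (\<xi> \<omega>, \<eta> \<omega>))) = integral\<^sup>L M \<xi>" by (subst mean1_law) auto
  have l2: "mean2 (law M (\<lambda>\<omega>. (\<xi> \<omega>, \<eta> \<omega>))) = ?E" by (subst mean2_law) auto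
  show ?thesis
    unfolding Ham_eq HhatEx_def bEx_def fEx_def Let_def l1 l2 c m1
    unfolding m2'
    by (simp add: power2_eq_square field_simps)
qed

theorem part12:
  fixes M :: "'w measure"
  assumes M: "prob_space M" and c1: "0 < c1" "c1 < 1"
  shows "assumption_F M (bEx b1 b2) (fEx c1 c2 c3 f1)
    \<and> (\<forall>\<xi> \<eta>. L2 M \<xi> \<and> L2_sigma M \<xi> \<eta> \<longrightarrow>
          PhiF M (bEx b1 b2) (fEx c1 c2 c3 f1) \<xi> \<eta>
            = law M (\<lambda>\<omega>. (\<xi> \<omega>, c1 / (1 - c1) * integral\<^sup>L M \<eta> + \<eta> \<omega>))
        \<and> (\<forall>x p. Ham (bEx b1 b2) (fEx c1 c2 c3 f1) x p (PhiF M (bEx b1 b2) (fEx c1 c2 c3 f1) \<xi> \<eta>)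
                 = HhatEx c1 c2 c3 b1 b2 f1 x p (law M (\<lambda>\<omega>. (\<xi> \<omega>, \<eta> \<omega>)))))"
proof -
  have Phi: "PhiF M (bEx b1 b2) (fEx c1 c2 c3 f1) \<xi> \<eta>
            = law M (\<lambda>\<omega>. (\<xi> \<omega>, c1 / (1 - c1) * integral\<^sup>L M \<eta> + \<eta> \<omega>))"
    if "L2 M \<xi>" "L2 M \<eta>" for \<xi> \<eta>
    unfolding PhiF_def fixed_point[OF M c1 that] by simp
  show ?thesis
    unfolding assumption_F_def
    using fixed_point[OF M c1] Phi Ham_Phi[OF M c1] is_min_iff
    by (auto simp: L2_sigma_def)
qed

lemma psd_quad:
  assumes "psd3 (matEx c1 c2 c3 D1 D2)"
  shows "0 \<le> (1 - (1/(1-c1) * D2 - c1/(1-c1))) * v1\<^sup>2 + (1/(1-c1) * D2 - c1/(1-c1)) * v2\<^sup>2 + c2 * v3\<^sup>2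
            + (c3/(1-c1) - D1) * v1 * v3 + (c3/(1-c1) + D1) * v2 * v3"
proof -
  have "0 \<le> (vector [v1, v2, v3] :: real^3) \<bullet> (matEx c1 c2 c3 D1 D2 *v vector [v1, v2, v3])"
    using assms unfolding psd3_def by blast
  also have "\<dots> = (1 - (1/(1-c1) * D2 - c1/(1-c1))) * v1\<^sup>2 + (1/(1-c1) * D2 - c1/(1-c1)) * v2\<^sup>2 + c2 * v3\<^sup>2
            + (c3/(1-c1) - D1) * v1 * v3 + (c3/(1-c1) + D1) * v2 * v3"
    unfolding matEx_def Let_def
    by (simp add: inner_vec_def matrix_vector_mult_def sum_3 vector_3 power2_eq_square algebra_simps)
  finally show ?thesis .
qed

lemma L2v_meas: "L2v M X \<Longrightarrow> X \<in> borel_measurable M" unfolding L2v_def by simp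

lemma mult_le_sq_sum: "(a::real) * b \<le> a\<^sup>2 + b\<^sup>2"
proof -
  have "0 \<le> (a - b)\<^sup>2" by simp
  then have "2 * (a * b) \<le> a\<^sup>2 + b\<^sup>2" by (simp add: power2_diff)
  moreover have "0 \<le> a\<^sup>2 + b\<^sup>2" by simp
  ultimately show ?thesis by linarith
qed

lemma integrable_inner_L2:
  fixes A B :: "'w \<Rightarrow> real \<times> real"
  assumes [measurable]: "A \<in> borel_measurable M" "B \<in> borel_measurable M"
    and iA: "integrable M (\<lambda>\<omega>. (norm (A \<omega>))\<^sup>2)" and iB: "integrable M (\<lambda>\<omega>. (norm (B \<omega>))\<^sup>2)"
  shows "integrable M (\<lambda>\<omega>. A \<omega> \<bullet> B \<omega>)"
proof (rule Bochner_Integration.integrable_bound)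
  show "integrable M (\<lambda>\<omega>. (norm (A \<omega>))\<^sup>2 + (norm (B \<omega>))\<^sup>2)" using iA iB by simp
  show "(\<lambda>\<omega>. A \<omega> \<bullet> B \<omega>) \<in> borel_measurable M" by measurable
  show "AE \<omega> in M. norm (A \<omega> \<bullet> B \<omega>) \<le> norm ((norm (A \<omega>))\<^sup>2 + (norm (B \<omega>))\<^sup>2)"
  proof (intro AE_I2)
    fix \<omega>
    have "\<bar>A \<omega> \<bullet> B \<omega>\<bar> \<le> norm (A \<omega>) * norm (B \<omega>)" by (rule Cauchy_Schwarz_ineq2)
    also have "\<dots> \<le> (norm (A \<omega>))\<^sup>2 + (norm (B \<omega>))\<^sup>2" by (rule mult_le_sq_sum)
    finally show "norm (A \<omega> \<bullet> B \<omega>) \<le> norm ((norm (A \<omega>))\<^sup>2 + (norm (B \<omega>))\<^sup>2)" by simp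
  qed
qed

lemma two_mult_le: "2 * (a::real) * b \<le> a\<^sup>2 + b\<^sup>2"
proof -
  have "0 \<le> (a - b)\<^sup>2" by simp
  then show ?thesis by (simp add: power2_diff)
qed

lemma norm_diff_sq_le: "(norm (a - b :: 'a::real_normed_vector))\<^sup>2 \<le> 2 * (norm a)\<^sup>2 + 2 * (norm b)\<^sup>2"
proof -
  have "norm (a - b) \<le> norm a + norm b" by (rule norm_triangle_ineq4)
  then have "(norm (a - b))\<^sup>2 \<le> (norm a + norm b)\<^sup>2" by (simp add: power_mono)
  also have "\<dots> \<le> 2 * (norm a)\<^sup>2 + 2 * (norm b)\<^sup>2"
    using two_mult_le[of "norm a" "norm b"] by (simp add: power2_sum)
  finally show ?thesis .
qed

lemma lions_unique:
  fixes X0 :: "'w \<Rightarrow> real \<times> real"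
  assumes M: "prob_space M" and X0: "L2v M X0"
    and g1: "lions_deriv M U (law M X0) g1" and g2: "lions_deriv M U (law M X0) g2"
  shows "AE \<omega> in M. g1 (X0 \<omega>) = g2 (X0 \<omega>)"
proof -
  interpret prob_space M by fact
  have [measurable]: "X0 \<in> borel_measurable M" using X0 L2v_meas by blast
  have [measurable]: "g1 \<in> borel_measurable borel" "g2 \<in> borel_measurable borel"
    using g1 g2 unfolding lions_deriv_def by auto
  have i1: "integrable M (\<lambda>\<omega>. (norm (g1 (X0 \<omega>)))\<^sup>2)"
    using g1 unfolding lions_deriv_def law_def by (subst (asm) integrable_distr_eq) auto
  have i2: "integrable M (\<lambda>\<omega>. (norm (g2 (X0 \<omega>)))\<^sup>2)"
    using g2 unfolding lions_deriv_def law_def by (subst (asm) integrable_distr_eq) auto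
  have F1: "\<forall>\<epsilon>>0. \<exists>\<delta>>0. \<forall>Y. L2v M Y \<and> L2norm M Y < \<delta> \<longrightarrow>
            \<bar>U (law M (\<lambda>\<omega>. X0 \<omega> + Y \<omega>)) - U (law M X0) - integral\<^sup>L M (\<lambda>\<omega>. g1 (X0 \<omega>) \<bullet> Y \<omega>)\<bar>
              \<le> \<epsilon> * L2norm M Y"
    using g1 X0 unfolding lions_deriv_def by blast
  have F2: "\<forall>\<epsilon>>0. \<exists>\<delta>>0. \<forall>Y. L2v M Y \<and> L2norm M Y < \<delta> \<longrightarrow>
            \<bar>U (law M (\<lambda>\<omega>. X0 \<omega> + Y \<omega>)) - U (law M X0) - integral\<^sup>L M (\<lambda>\<omega>. g2 (X0 \<omega>) \<bullet> Y \<omega>)\<bar>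
              \<le> \<epsilon> * L2norm M Y"
    using g2 X0 unfolding lions_deriv_def by blast
  define D where "D \<omega> = g1 (X0 \<omega>) - g2 (X0 \<omega>)" for \<omega>
  have [measurable]: "D \<in> borel_measurable M" unfolding D_def by measurable
  have iD: "integrable M (\<lambda>\<omega>. (norm (D \<omega>))\<^sup>2)"
  proof (rule Bochner_Integration.integrable_bound)
    show "integrable M (\<lambda>\<omega>. 2 * (norm (g1 (X0 \<omega>)))\<^sup>2 + 2 * (norm (g2 (X0 \<omega>)))\<^sup>2)" using i1 i2 by simp
    show "AE \<omega> in M. norm ((norm (D \<omega>))\<^sup>2) \<le> norm (2 * (norm (g1 (X0 \<omega>)))\<^sup>2 + 2 * (norm (g2 (X0 \<omega>)))\<^sup>2)"
      unfolding D_def using norm_diff_sq_le by (intro AE_I2) auto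
  qed measurable
  define N2 where "N2 = integral\<^sup>L M (\<lambda>\<omega>. (norm (D \<omega>))\<^sup>2)"
  have N2nn: "0 \<le> N2" unfolding N2_def by (intro integral_nonneg_AE) auto
  have "N2 = 0"
  proof (rule ccontr)
    assume "N2 \<noteq> 0"
    then have N2p: "0 < N2" using N2nn by simp
    define N where "N = sqrt N2"
    have Np: "0 < N" unfolding N_def using N2p by simp
    have NN: "N * N = N2" unfolding N_def using N2nn by simp
    obtain \<delta>1 where d1: "\<delta>1 > 0" and B1: "\<forall>Y. L2v M Y \<and> L2norm M Y < \<delta>1 \<longrightarrow>
            \<bar>U (law M (\<lambda>\<omega>. X0 \<omega> + Y \<omega>)) - U (law M X0) - integral\<^sup>L M (\<lambda>\<omega>. g1 (X0 \<omega>) \<bullet> Y \<omega>)\<bar>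
              \<le> N / 4 * L2norm M Y"
      using F1[rule_format, of "N / 4"] Np by auto
    obtain \<delta>2 where d2: "\<delta>2 > 0" and B2: "\<forall>Y. L2v M Y \<and> L2norm M Y < \<delta>2 \<longrightarrow>
            \<bar>U (law M (\<lambda>\<omega>. X0 \<omega> + Y \<omega>)) - U (law M X0) - integral\<^sup>L M (\<lambda>\<omega>. g2 (X0 \<omega>) \<bullet> Y \<omega>)\<bar>
              \<le> N / 4 * L2norm M Y"
      using F2[rule_format, of "N / 4"] Np by auto
    define t where "t = min \<delta>1 \<delta>2 / (2 * N)"
    have tp: "0 < t" unfolding t_def using d1 d2 Np by simp
    define Y where "Y \<omega> = t *\<^sub>R D \<omega>" for \<omega>
    have [measurable]: "Y \<in> borel_measurable M" unfolding Y_def by measurable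
    have nY: "(norm (Y \<omega>))\<^sup>2 = t\<^sup>2 * (norm (D \<omega>))\<^sup>2" for \<omega>
      unfolding Y_def using tp by (simp add: power_mult_distrib)
    have LY: "L2v M Y" unfolding L2v_def nY using iD by simp
    have nrm: "L2norm M Y = t * N"
      unfolding L2norm_def nY N_def N2_def using tp by (simp add: real_sqrt_mult)
    have tN: "t * N < \<delta>1" "t * N < \<delta>2" unfolding t_def using Np d1 d2 by auto
    have b1: "\<bar>U (law M (\<lambda>\<omega>. X0 \<omega> + Y \<omega>)) - U (law M X0) - integral\<^sup>L M (\<lambda>\<omega>. g1 (X0 \<omega>) \<bullet> Y \<omega>)\<bar>
              \<le> N / 4 * (t * N)" unfolding nrm[symmetric] by (rule B1[rule_format]) (simp add: LY nrm tN)
    have b2: "\<bar>U (law M (\<lambda>\<omega>. X0 \<omega> + Y \<omega>)) - U (law M X0) - integral\<^sup>L M (\<lambda>\<omega>. g2 (X0 \<omega>) \<bullet> Y \<omega>)\<bar>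
              \<le> N / 4 * (t * N)" unfolding nrm[symmetric] by (rule B2[rule_format]) (simp add: LY nrm tN)
    have iY: "integrable M (\<lambda>\<omega>. (norm (Y \<omega>))\<^sup>2)" using LY unfolding L2v_def by simp
    have j1: "integrable M (\<lambda>\<omega>. g1 (X0 \<omega>) \<bullet> Y \<omega>)" by (rule integrable_inner_L2) (use i1 iY in auto)
    have j2: "integrable M (\<lambda>\<omega>. g2 (X0 \<omega>) \<bullet> Y \<omega>)" by (rule integrable_inner_L2) (use i2 iY in auto)
    have "integral\<^sup>L M (\<lambda>\<omega>. g1 (X0 \<omega>) \<bullet> Y \<omega>) - integral\<^sup>L M (\<lambda>\<omega>. g2 (X0 \<omega>) \<bullet> Y \<omega>)
          = integral\<^sup>L M (\<lambda>\<omega>. g1 (X0 \<omega>) \<bullet> Y \<omega> - g2 (X0 \<omega>) \<bullet> Y \<omega>)"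
      using j1 j2 by simp
    also have "\<dots> = integral\<^sup>L M (\<lambda>\<omega>. t * (norm (D \<omega>))\<^sup>2)"
    proof (rule Bochner_Integration.integral_cong[OF refl])
      fix \<omega>
      have "g1 (X0 \<omega>) \<bullet> Y \<omega> - g2 (X0 \<omega>) \<bullet> Y \<omega> = D \<omega> \<bullet> Y \<omega>"
        unfolding D_def inner_diff_left ..
      also have "\<dots> = t * (D \<omega> \<bullet> D \<omega>)" by (simp add: Y_def)
      also have "\<dots> = t * (norm (D \<omega>))\<^sup>2" by (simp add: power2_norm_eq_inner)
      finally show "g1 (X0 \<omega>) \<bullet> Y \<omega> - g2 (X0 \<omega>) \<bullet> Y \<omega> = t * (norm (D \<omega>))\<^sup>2" .
    qed
    also have "\<dots> = t * N2" unfolding N2_def by simp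
    finally have eq: "integral\<^sup>L M (\<lambda>\<omega>. g1 (X0 \<omega>) \<bullet> Y \<omega>) - integral\<^sup>L M (\<lambda>\<omega>. g2 (X0 \<omega>) \<bullet> Y \<omega>) = t * N2" .
    have "t * N2 \<le> N / 4 * (t * N) + N / 4 * (t * N)" using b1 b2 eq by linarith
    also have "\<dots> = t * N2 / 2" using NN by (simp add: algebra_simps)
    finally show False using tp N2p by simp
  qed
  then have "AE \<omega> in M. (norm (D \<omega>))\<^sup>2 = 0"
    using integral_nonneg_eq_0_iff_AE[OF iD] unfolding N2_def by auto
  then show ?thesis unfolding D_def by (auto elim: AE_mp)
qed

lemma fst_borel': "fst \<in> borel_measurable (borel :: (real \<times> real) measure)"
  by (subst borel_prod[symmetric]) (rule measurable_fst)
lemma snd_borel': "snd \<in> borel_measurable (borel :: (real \<times> real) measure)"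
  by (subst borel_prod[symmetric]) (rule measurable_snd)

lemma L2v_comp:
  fixes Z :: "'w \<Rightarrow> real \<times> real"
  assumes M: "prob_space M" and Z: "L2v M Z"
  shows "integrable M (\<lambda>\<omega>. fst (Z \<omega>))" "integrable M (\<lambda>\<omega>. snd (Z \<omega>))"
    "integrable M (\<lambda>\<omega>. (fst (Z \<omega>))\<^sup>2)" "integrable M (\<lambda>\<omega>. (snd (Z \<omega>))\<^sup>2)"
    "(\<lambda>\<omega>. fst (Z \<omega>)) \<in> borel_measurable M" "(\<lambda>\<omega>. snd (Z \<omega>)) \<in> borel_measurable M"
proof -
  interpret prob_space M by fact
  have [measurable]: "Z \<in> borel_measurable M" using Z L2v_meas by blast
  have iZ: "integrable M (\<lambda>\<omega>. (norm (Z \<omega>))\<^sup>2)" using Z unfolding L2v_def by simp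
  show m1: "(\<lambda>\<omega>. fst (Z \<omega>)) \<in> borel_measurable M" "(\<lambda>\<omega>. snd (Z \<omega>)) \<in> borel_measurable M"
    by (rule measurable_compose[OF _ fst_borel'], simp) (rule measurable_compose[OF _ snd_borel'], simp)
  note mm[measurable] = m1
  have eq: "(norm (Z \<omega>))\<^sup>2 = (fst (Z \<omega>))\<^sup>2 + (snd (Z \<omega>))\<^sup>2" for \<omega>
    by (cases "Z \<omega>") (simp add: norm_Pair)
  show s1: "integrable M (\<lambda>\<omega>. (fst (Z \<omega>))\<^sup>2)"
    by (rule Bochner_Integration.integrable_bound[OF iZ]) (auto simp: eq)
  show s2: "integrable M (\<lambda>\<omega>. (snd (Z \<omega>))\<^sup>2)"
    by (rule Bochner_Integration.integrable_bound[OF iZ]) (auto simp: eq)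
  show "integrable M (\<lambda>\<omega>. fst (Z \<omega>))" by (rule square_integrable_imp_integrable[OF m1(1) s1])
  show "integrable M (\<lambda>\<omega>. snd (Z \<omega>))" by (rule square_integrable_imp_integrable[OF m1(2) s2])
qed

lemma (in prob_space) sq_expectation_le:
  fixes f :: "'a \<Rightarrow> real"
  assumes "integrable M f" "integrable M (\<lambda>x. (f x)\<^sup>2)"
  shows "(expectation f)\<^sup>2 \<le> expectation (\<lambda>x. (f x)\<^sup>2)"
  using variance_eq[OF assms] variance_positive[of f] by simp

lemma mean_norm_le:
  fixes Y :: "'w \<Rightarrow> real \<times> real"
  assumes M: "prob_space M" and Y: "L2v M Y"
  shows "norm (integral\<^sup>L M (\<lambda>\<omega>. fst (Y \<omega>)), integral\<^sup>L M (\<lambda>\<omega>. snd (Y \<omega>))) \<le> L2norm M Y"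
proof -
  interpret prob_space M by fact
  note c = L2v_comp[OF M Y]
  have eq: "(norm (Y \<omega>))\<^sup>2 = (fst (Y \<omega>))\<^sup>2 + (snd (Y \<omega>))\<^sup>2" for \<omega>
    by (cases "Y \<omega>") (simp add: norm_Pair)
  have "(integral\<^sup>L M (\<lambda>\<omega>. fst (Y \<omega>)))\<^sup>2 + (integral\<^sup>L M (\<lambda>\<omega>. snd (Y \<omega>)))\<^sup>2
     \<le> integral\<^sup>L M (\<lambda>\<omega>. (fst (Y \<omega>))\<^sup>2) + integral\<^sup>L M (\<lambda>\<omega>. (snd (Y \<omega>))\<^sup>2)"
    using sq_expectation_le[OF c(1) c(3)] sq_expectation_le[OF c(2) c(4)] by linarith
  also have "\<dots> = integral\<^sup>L M (\<lambda>\<omega>. (norm (Y \<omega>))\<^sup>2)" unfolding eq using c by simp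
  finally show ?thesis unfolding L2norm_def norm_Pair by (simp add: real_sqrt_le_mono)
qed

lemma lions_const:
  fixes F :: "real \<times> real \<Rightarrow> real" and \<rho> :: "(real \<times> real) measure"
  assumes M: "prob_space M" and fin: "finite_measure \<rho>"
    and U: "\<And>\<nu>. U \<nu> = F (mean1 \<nu>, mean2 \<nu>)"
    and dF: "(F has_derivative (\<lambda>h. a1 * fst h + a2 * snd h)) (at (mean1 \<rho>, mean2 \<rho>))"
  shows "lions_deriv M U \<rho> (\<lambda>_. (a1, a2))"
  unfolding lions_deriv_def
proof (intro conjI allI impI)
  interpret prob_space M by fact
  show "(\<lambda>_. (a1, a2)) \<in> borel_measurable borel" by simp
  show "integrable \<rho> (\<lambda>z. (norm (a1, a2))\<^sup>2)" using fin by (simp add: finite_measure.integrable_const)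
  fix X :: "'a \<Rightarrow> real \<times> real" and \<epsilon> :: real
  assume XX: "L2v M X \<and> law M X = \<rho>" and ep: "0 < \<epsilon>"
  then have X: "L2v M X" and lX: "law M X = \<rho>" by auto
  note cX = L2v_comp[OF M X]
  have [measurable]: "X \<in> borel_measurable M" using X L2v_meas by blast
  have "mean1 (law M X) = integral\<^sup>L M (\<lambda>\<omega>. fst (X \<omega>))"
    unfolding mean1_def law_def by (subst integral_distr) (auto intro: fst_borel')
  then have m1: "mean1 \<rho> = integral\<^sup>L M (\<lambda>\<omega>. fst (X \<omega>))" using lX by simp
  have "mean2 (law M X) = integral\<^sup>L M (\<lambda>\<omega>. snd (X \<omega>))"
    unfolding mean2_def law_def by (subst integral_distr) (auto intro: snd_borel')
  then have m2: "mean2 \<rho> = integral\<^sup>L M (\<lambda>\<omega>. snd (X \<omega>))" using lX by simp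
  obtain d where d: "d > 0" and dd: "\<forall>y. norm (y - (mean1 \<rho>, mean2 \<rho>)) < d \<longrightarrow>
      norm (F y - F (mean1 \<rho>, mean2 \<rho>) - (a1 * fst (y - (mean1 \<rho>, mean2 \<rho>)) + a2 * snd (y - (mean1 \<rho>, mean2 \<rho>))))
        \<le> \<epsilon> * norm (y - (mean1 \<rho>, mean2 \<rho>))"
    using dF ep unfolding has_derivative_at_alt by blast
  show "\<exists>\<delta>>0. \<forall>Y. L2v M Y \<and> L2norm M Y < \<delta> \<longrightarrow>
            \<bar>U (law M (\<lambda>\<omega>. X \<omega> + Y \<omega>)) - U \<rho> - integral\<^sup>L M (\<lambda>\<omega>. (a1, a2) \<bullet> Y \<omega>)\<bar>
              \<le> \<epsilon> * L2norm M Y"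
  proof (intro exI[of _ d] conjI allI impI d)
    fix Y :: "'a \<Rightarrow> real \<times> real"
    assume YY: "L2v M Y \<and> L2norm M Y < d"
    then have Y: "L2v M Y" and lY: "L2norm M Y < d" by auto
    note cY = L2v_comp[OF M Y]
    have [measurable]: "Y \<in> borel_measurable M" using Y L2v_meas by blast
    define h where "h = (integral\<^sup>L M (\<lambda>\<omega>. fst (Y \<omega>)), integral\<^sup>L M (\<lambda>\<omega>. snd (Y \<omega>)))"
    have nh: "norm h \<le> L2norm M Y" unfolding h_def by (rule mean_norm_le[OF M Y])
    have "mean1 (law M (\<lambda>\<omega>. X \<omega> + Y \<omega>)) = integral\<^sup>L M (\<lambda>\<omega>. fst (X \<omega>)) + integral\<^sup>L M (\<lambda>\<omega>. fst (Y \<omega>))"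
      unfolding mean1_def law_def
      by (subst integral_distr) (auto intro: fst_borel' simp: cX cY)
    then have l1: "mean1 (law M (\<lambda>\<omega>. X \<omega> + Y \<omega>)) = mean1 \<rho> + fst h"
      unfolding m1 h_def by simp
    have "mean2 (law M (\<lambda>\<omega>. X \<omega> + Y \<omega>)) = integral\<^sup>L M (\<lambda>\<omega>. snd (X \<omega>)) + integral\<^sup>L M (\<lambda>\<omega>. snd (Y \<omega>))"
      unfolding mean2_def law_def
      by (subst integral_distr) (auto intro: snd_borel' simp: cX cY)
    then have l2: "mean2 (law M (\<lambda>\<omega>. X \<omega> + Y \<omega>)) = mean2 \<rho> + snd h"
      unfolding m2 h_def by simp
    have li: "integral\<^sup>L M (\<lambda>\<omega>. (a1, a2) \<bullet> Y \<omega>) = a1 * fst h + a2 * snd h"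
      unfolding h_def inner_prod_def by (simp add: cY)
    have hm: "(mean1 \<rho> + fst h, mean2 \<rho> + snd h) - (mean1 \<rho>, mean2 \<rho>) = h" by (cases h) simp
    have "norm h < d" using nh lY by linarith
    then have "norm (F (mean1 \<rho> + fst h, mean2 \<rho> + snd h) - F (mean1 \<rho>, mean2 \<rho>) - (a1 * fst h + a2 * snd h))
        \<le> \<epsilon> * norm h" using dd[rule_format, of "(mean1 \<rho> + fst h, mean2 \<rho> + snd h)"] unfolding hm by simp
    also have "\<dots> \<le> \<epsilon> * L2norm M Y" using nh ep by simp
    finally show "\<bar>U (law M (\<lambda>\<omega>. X \<omega> + Y \<omega>)) - U \<rho> - integral\<^sup>L M (\<lambda>\<omega>. (a1, a2) \<bullet> Y \<omega>)\<bar>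
              \<le> \<epsilon> * L2norm M Y"
      unfolding U[of "law M (\<lambda>\<omega>. X \<omega> + Y \<omega>)"] U[of \<rho>] l1 l2 li by simp
  qed
qed

definition Fh :: "real \<Rightarrow> real \<Rightarrow> real \<Rightarrow> real \<Rightarrow> (real \<times> real \<Rightarrow> real) \<Rightarrow> (real \<Rightarrow> real) \<Rightarrow> (real \<Rightarrow> real)
    \<Rightarrow> real \<Rightarrow> real \<Rightarrow> real \<times> real \<Rightarrow> real" where
  "Fh k cb k3 c2 b1 b2 f1 x p z =
     - (1/2) * (k * snd z + p)\<^sup>2 + p * (b1 (fst z, cb * snd z) + b2 x)
      + c2 * x * fst z + k3 * x * snd z + f1 x"

lemma HhatEx_Fh: "HhatEx c1 c2 c3 b1 b2 f1 x p \<nu> = Fh (c1 / (1 - c1)) (1 / (1 - c1)) (c3 / (1 - c1)) c2 b1 b2 f1 x p (mean1 \<nu>, mean2 \<nu>)"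
  unfolding HhatEx_def Fh_def Let_def power2_abs fst_conv snd_conv ..

lemma Fh_deriv:
  assumes b1d: "\<And>m. (b1 has_derivative (\<lambda>h. D1b1 m * fst h + D2b1 m * snd h)) (at m)"
  shows "(Fh k cb k3 c2 b1 b2 f1 x p has_derivative
     (\<lambda>h. (p * D1b1 (a, cb * b) + c2 * x) * fst h
        + (- (k * b + p) * k + p * cb * D2b1 (a, cb * b) + k3 * x) * snd h))
     (at (a, b))"
proof -
  have inner: "((\<lambda>z::real\<times>real. (fst z, cb * snd z)) has_derivative (\<lambda>h. (fst h, cb * snd h))) (at (a, b))"
    by (rule has_derivative_Pair has_derivative_fst has_derivative_mult_right has_derivative_snd has_derivative_ident)+
  have comp: "((\<lambda>z. b1 (fst z, cb * snd z)) has_derivative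
     (\<lambda>h. D1b1 (a, cb * b) * fst h + D2b1 (a, cb * b) * (cb * snd h))) (at (a, b))"
    using has_derivative_compose[OF inner b1d[of "(fst (a, b), cb * snd (a, b))"]] unfolding fst_conv snd_conv .
  show ?thesis
    unfolding Fh_def[abs_def]
    apply (rule has_derivative_eq_rhs)
     apply (rule derivative_intros comp)+
    apply (rule ext)
    apply (simp add: algebra_simps power2_eq_square)
    done
qed

lemma seq_deriv:
  fixes f :: "real \<Rightarrow> real"
  assumes "f differentiable (at x)"
  shows "(\<lambda>n. (f (x + inverse (real (Suc n))) - f x) / (x + inverse (real (Suc n)) - x)) \<longlonglongrightarrow> deriv f x"
proof -
  have "DERIV f x :> deriv f x" using assms DERIV_deriv_iff_real_differentiable by blast
  then have L: "((\<lambda>y. (f y - f x) / (y - x)) \<longlongrightarrow> deriv f x) (at x)"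
    unfolding has_field_derivative_iff .
  have s: "(\<lambda>n. x + inverse (real (Suc n))) \<longlonglongrightarrow> x"
    using tendsto_add[OF tendsto_const[of x] LIMSEQ_inverse_real_of_nat] by simp
  have ne: "\<forall>i. x + inverse (real (Suc i)) \<in> UNIV - {x}" by simp
  have "((\<lambda>y. (f y - f x) / (y - x)) \<circ> (\<lambda>n. x + inverse (real (Suc n)))) \<longlonglongrightarrow> deriv f x"
    by (rule L[unfolded tendsto_at_iff_sequentially, rule_format]) (use ne s in auto)
  then show ?thesis by (simp only: comp_def)
qed

lemma deriv_agree1:
  fixes f g :: "real \<Rightarrow> real"
  assumes "f differentiable (at x)" "g differentiable (at x)" "f x = g x"
    "\<And>n. f (x + inverse (real (Suc n))) = g (x + inverse (real (Suc n)))"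
  shows "deriv f x = deriv g x"
proof -
  have "(\<lambda>n. (g (x + inverse (real (Suc n))) - g x) / (x + inverse (real (Suc n)) - x)) \<longlonglongrightarrow> deriv f x"
    using seq_deriv[OF assms(1)] unfolding assms(3,4) .
  with seq_deriv[OF assms(2)] show ?thesis using LIMSEQ_unique by blast
qed

lemma deriv_agree:
  fixes F G :: "real \<Rightarrow> real \<times> real"
  assumes "F differentiable (at x)" "G differentiable (at x)" "F x = G x"
    "\<And>n. F (x + inverse (real (Suc n))) = G (x + inverse (real (Suc n)))"
  shows "deriv (\<lambda>x'. fst (F x')) x = deriv (\<lambda>x'. fst (G x')) x"
        "deriv (\<lambda>x'. snd (F x')) x = deriv (\<lambda>x'. snd (G x')) x"
proof -
  obtain F' where F': "(F has_derivative F') (at x)" using assms(1) unfolding differentiable_def by blast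
  obtain G' where G': "(G has_derivative G') (at x)" using assms(2) unfolding differentiable_def by blast
  show "deriv (\<lambda>x'. fst (F x')) x = deriv (\<lambda>x'. fst (G x')) x"
    by (rule deriv_agree1) (use has_derivative_fst[OF F'] has_derivative_fst[OF G'] assms in \<open>auto intro: differentiableI\<close>)
  show "deriv (\<lambda>x'. snd (F x')) x = deriv (\<lambda>x'. snd (G x')) x"
    by (rule deriv_agree1) (use has_derivative_snd[OF F'] has_derivative_snd[OF G'] assms in \<open>auto intro: differentiableI\<close>)
qed

lemma Hpp_Fh: "deriv (deriv (\<lambda>p'. Fh k cb k3 c2 b1 b2 f1 x p' z)) p = -1"
proof -
  let ?m = "k * snd z" and ?C = "b1 (fst z, cb * snd z) + b2 x"
  have "deriv (\<lambda>p'. Fh k cb k3 c2 b1 b2 f1 x p' z) = (\<lambda>p'. - (?m + p') + ?C)"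
  proof (rule ext)
    fix p'
    have "((\<lambda>p'. Fh k cb k3 c2 b1 b2 f1 x p' z) has_real_derivative (- (?m + p') + ?C)) (at p')"
      unfolding Fh_def
      by (auto intro!: derivative_eq_intros simp: power2_eq_square algebra_simps)
    then show "deriv (\<lambda>p'. Fh k cb k3 c2 b1 b2 f1 x p' z) p' = - (?m + p') + ?C"
      by (rule DERIV_imp_deriv)
  qed
  moreover have "deriv (\<lambda>p'. - (?m + p') + ?C) p = -1"
    by (rule DERIV_imp_deriv) (auto intro!: derivative_eq_intros)
  ultimately show ?thesis by simp
qed

definition integrandLLH :: "(real \<Rightarrow> real \<Rightarrow> (real \<times> real) measure \<Rightarrow> real) \<Rightarrow> (real \<times> real) measure
    \<Rightarrow> ('w \<Rightarrow> real) \<Rightarrow> ('w \<Rightarrow> real) \<Rightarrow> ('w \<Rightarrow> real) \<Rightarrow> ('w \<Rightarrow> real) \<Rightarrow> (real \<Rightarrow> real)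
    \<Rightarrow> (real \<Rightarrow> real \<Rightarrow> real \<times> real \<Rightarrow> real \<times> real) \<Rightarrow> 'w \<times> 'w \<Rightarrow> real" where
  "integrandLLH Hh \<rho> \<xi> \<eta> \<gamma> \<zeta> \<phi> DH = (\<lambda>(\<omega>, \<omega>').
               (let x = \<xi> \<omega>; p = \<phi> x; y' = (\<xi> \<omega>', \<phi> (\<xi> \<omega>'));
                    Hpp = deriv (deriv (\<lambda>p'. Hh x p' \<rho>)) p;
                    Hxr1 = deriv (\<lambda>x'. fst (DH x' p y')) x;
                    Hxr2 = deriv (\<lambda>x'. snd (DH x' p y')) x;
                    Hpr1 = deriv (\<lambda>p'. fst (DH x p' y')) p;
                    Hpr2 = deriv (\<lambda>p'. snd (DH x p' y')) p
                in \<zeta> \<omega> * Hpp * \<zeta> \<omega>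
                   - \<eta> \<omega> * (Hxr1 * \<eta> \<omega>' + Hxr2 * (\<gamma> \<omega>' + \<zeta> \<omega>'))
                   - (\<gamma> \<omega> - \<zeta> \<omega>) * (Hpr1 * \<eta> \<omega>' + Hpr2 * (\<gamma> \<omega>' + \<zeta> \<omega>'))))"

lemma LLH_iff: "LLH M Hh \<longleftrightarrow>
     (\<forall>\<xi> \<eta> \<gamma> \<zeta> (\<phi>::real \<Rightarrow> real).
        L2 M \<xi> \<and> L2 M \<eta> \<and> L2 M \<gamma> \<and> L2 M \<zeta> \<and> (\<exists>K. K-lipschitz_on UNIV \<phi>) \<longrightarrow>
          (\<exists>DH. admissible_LD M Hh (law M (\<lambda>\<omega>. (\<xi> \<omega>, \<phi> (\<xi> \<omega>)))) DH) \<and>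
          (\<forall>DH. admissible_LD M Hh (law M (\<lambda>\<omega>. (\<xi> \<omega>, \<phi> (\<xi> \<omega>)))) DH \<longrightarrow>
             integral\<^sup>L (M \<Otimes>\<^sub>M M) (integrandLLH Hh (law M (\<lambda>\<omega>. (\<xi> \<omega>, \<phi> (\<xi> \<omega>)))) \<xi> \<eta> \<gamma> \<zeta> \<phi> DH) \<le> 0))"
  unfolding LLH_def integrandLLH_def Let_def ..

lemma DH_comp:
  fixes DH :: "real \<Rightarrow> real \<Rightarrow> real \<times> real \<Rightarrow> real \<times> real"
  assumes "(\<lambda>(x, p, y). DH x p y) \<in> borel_measurable borel"
    and [measurable]: "a \<in> borel_measurable N" "b \<in> borel_measurable N" "c \<in> borel_measurable N"
  shows "(\<lambda>z. DH (a z) (b z) (c z)) \<in> borel_measurable N"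
proof -
  have "(\<lambda>z. (a z, b z, c z)) \<in> N \<rightarrow>\<^sub>M (borel \<Otimes>\<^sub>M (borel \<Otimes>\<^sub>M borel))" by measurable
  then have "(\<lambda>z. (a z, b z, c z)) \<in> borel_measurable N" unfolding borel_prod .
  from measurable_compose[OF this assms(1)] show ?thesis by simp
qed

lemma L2_lip:
  fixes \<xi> :: "'w \<Rightarrow> real"
  assumes M: "prob_space M" and L: "L2 M \<xi>" and K: "K-lipschitz_on UNIV \<phi>"
  shows "L2 M (\<lambda>\<omega>. \<phi> (\<xi> \<omega>))"
proof -
  interpret prob_space M by fact
  have [measurable]: "\<xi> \<in> borel_measurable M" using L L2_meas by blast
  have "continuous_on UNIV \<phi>" by (rule lipschitz_on_continuous_on[OF K])
  then have [measurable]: "\<phi> \<in> borel_measurable borel" by (rule borel_measurable_continuous_onI)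
  have K0: "0 \<le> K" using lipschitz_on_nonneg[OF K] .
  have bnd: "(\<phi> t)\<^sup>2 \<le> 2 * (\<phi> 0)\<^sup>2 + 2 * K\<^sup>2 * t\<^sup>2" for t
  proof -
    have "\<bar>\<phi> t - \<phi> 0\<bar> \<le> K * \<bar>t\<bar>" using lipschitz_onD[OF K, of t 0] by (simp add: dist_real_def)
    then have "(\<phi> t - \<phi> 0)\<^sup>2 \<le> (K * \<bar>t\<bar>)\<^sup>2"
      by (metis abs_ge_zero power2_abs power_mono)
    moreover have "(\<phi> t)\<^sup>2 \<le> 2 * (\<phi> t - \<phi> 0)\<^sup>2 + 2 * (\<phi> 0)\<^sup>2"
      using norm_diff_sq_le[of "\<phi> t - \<phi> 0" "- \<phi> 0"] by simp
    ultimately show ?thesis by (simp add: power_mult_distrib)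
  qed
  show ?thesis unfolding L2_def
  proof
    show "(\<lambda>\<omega>. \<phi> (\<xi> \<omega>)) \<in> borel_measurable M" by measurable
    show "integrable M (\<lambda>\<omega>. (\<phi> (\<xi> \<omega>))\<^sup>2)"
    proof (rule Bochner_Integration.integrable_bound)
      show "integrable M (\<lambda>\<omega>. 2 * (\<phi> 0)\<^sup>2 + 2 * K\<^sup>2 * (\<xi> \<omega>)\<^sup>2)" using L2_sq[OF L] by simp
      show "AE \<omega> in M. norm ((\<phi> (\<xi> \<omega>))\<^sup>2) \<le> norm (2 * (\<phi> 0)\<^sup>2 + 2 * K\<^sup>2 * (\<xi> \<omega>)\<^sup>2)"
        using bnd by (intro AE_I2) (auto simp: abs_le_iff intro: order_trans)
    qed measurable
  qed
qed

lemma LLH_part: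
  fixes M1 :: "'v measure"
  assumes M1: "prob_space M1" and c1: "c1 < 1"
    and b1d: "\<And>m. (b1 has_derivative (\<lambda>h. D1b1 m * fst h + D2b1 m * snd h)) (at m)"
    and psd: "\<And>m1 m2. psd3 (matEx c1 c2 c3 (D1b1 (m1, m2)) (D2b1 (m1, m2)))"
  shows "LLH M1 (HhatEx c1 c2 c3 b1 b2 f1)"
  unfolding LLH_iff
proof (intro allI impI, intro conjI)
  fix \<xi> \<eta> \<gamma> \<zeta> :: "'v \<Rightarrow> real" and \<phi> :: "real \<Rightarrow> real"
  assume A: "L2 M1 \<xi> \<and> L2 M1 \<eta> \<and> L2 M1 \<gamma> \<and> L2 M1 \<zeta> \<and> (\<exists>K. K-lipschitz_on UNIV \<phi>)"
  then have Lx: "L2 M1 \<xi>" and Le: "L2 M1 \<eta>" and Lg: "L2 M1 \<gamma>" and Lz: "L2 M1 \<zeta>" by auto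
  from A obtain K where K: "K-lipschitz_on UNIV \<phi>" by auto
  interpret prob_space M1 by fact
  interpret P: pair_sigma_finite M1 M1
    using M1 by (simp add: pair_sigma_finite_def prob_space_imp_sigma_finite)
  have "continuous_on UNIV \<phi>" by (rule lipschitz_on_continuous_on[OF K])
  then have [measurable]: "\<phi> \<in> borel_measurable borel" by (rule borel_measurable_continuous_onI)
  have [measurable]: "\<xi> \<in> borel_measurable M1" "\<eta> \<in> borel_measurable M1"
     "\<gamma> \<in> borel_measurable M1" "\<zeta> \<in> borel_measurable M1" using Lx Le Lg Lz L2_meas by auto
  have Lp: "L2 M1 (\<lambda>\<omega>. \<phi> (\<xi> \<omega>))" by (rule L2_lip[OF M1 Lx K])
  define X0 where "X0 \<omega> = (\<xi> \<omega>, \<phi> (\<xi> \<omega>))" for \<omega>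
  have [measurable]: "X0 \<in> borel_measurable M1" unfolding X0_def by measurable
  have LX0: "L2v M1 X0"
  proof -
    have "integrable M1 (\<lambda>\<omega>. (\<xi> \<omega>)\<^sup>2 + (\<phi> (\<xi> \<omega>))\<^sup>2)" using L2_sq[OF Lx] L2_sq[OF Lp] by simp
    then show ?thesis unfolding L2v_def X0_def by (simp add: norm_Pair)
  qed
  define \<rho> where "\<rho> = law M1 X0"
  have \<rho>_eq: "law M1 (\<lambda>\<omega>. (\<xi> \<omega>, \<phi> (\<xi> \<omega>))) = \<rho>" unfolding \<rho>_def X0_def ..
  have fin: "finite_measure \<rho>" unfolding \<rho>_def law_def
    by (rule prob_space.finite_measure, rule prob_space_distr) simp
  define m1 where "m1 = mean1 \<rho>"
  define m2 where "m2 = mean2 \<rho>"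
  let ?k = "c1 / (1 - c1)" and ?cb = "1 / (1 - c1)" and ?k3 = "c3 / (1 - c1)"
  define D1 where "D1 = D1b1 (m1, ?cb * m2)"
  define D2 where "D2 = D2b1 (m1, ?cb * m2)"
  define G where "G x p y = (p * D1 + c2 * x, - (?k * m2 + p) * ?k + p * ?cb * D2 + ?k3 * x)"
    for x p :: real and y :: "real \<times> real"
  have lG: "lions_deriv M1 (HhatEx c1 c2 c3 b1 b2 f1 x p) \<rho> (G x p)" for x p
  proof -
    have "G x p = (\<lambda>_. (p * D1 + c2 * x, - (?k * m2 + p) * ?k + p * ?cb * D2 + ?k3 * x))"
      by (rule ext) (simp add: G_def)
    moreover have "lions_deriv M1 (HhatEx c1 c2 c3 b1 b2 f1 x p) \<rho>
         (\<lambda>_. (p * D1 + c2 * x, - (?k * m2 + p) * ?k + p * ?cb * D2 + ?k3 * x))"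
      apply (rule lions_const[OF M1 fin, where F = "Fh ?k ?cb ?k3 c2 b1 b2 f1 x p"])
       apply (rule HhatEx_Fh)
      using Fh_deriv[OF b1d, of ?k ?cb ?k3 c2 b2 f1 x p m1 m2] unfolding m1_def m2_def D1_def D2_def
      by (simp add: algebra_simps)
    ultimately show ?thesis by simp
  qed
  have admG: "admissible_LD M1 (HhatEx c1 c2 c3 b1 b2 f1) \<rho> G"
    unfolding admissible_LD_def
  proof (intro conjI allI)
    show "lions_deriv M1 (HhatEx c1 c2 c3 b1 b2 f1 x p) \<rho> (G x p)" for x p by (rule lG)
    show "(\<lambda>(x, p, y). G x p y) \<in> borel_measurable borel"
      unfolding G_def case_prod_beta'
      by (intro borel_measurable_continuous_onI continuous_intros)
    show "(\<lambda>x'. G x' p y) differentiable (at x)" for x p y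
      unfolding G_def by (intro differentiableI) (rule derivative_intros)+
    show "(\<lambda>p'. G x p' y) differentiable (at p)" for x p y
      unfolding G_def by (intro differentiableI) (rule derivative_intros)+
  qed
  show "(\<exists>DH. admissible_LD M1 (HhatEx c1 c2 c3 b1 b2 f1) (law M1 (\<lambda>\<omega>. (\<xi> \<omega>, \<phi> (\<xi> \<omega>)))) DH)"
    unfolding \<rho>_eq using admG by blast
  show "\<forall>DH. admissible_LD M1 (HhatEx c1 c2 c3 b1 b2 f1) (law M1 (\<lambda>\<omega>. (\<xi> \<omega>, \<phi> (\<xi> \<omega>)))) DH \<longrightarrow>
             integral\<^sup>L (M1 \<Otimes>\<^sub>M M1) (integrandLLH (HhatEx c1 c2 c3 b1 b2 f1) (law M1 (\<lambda>\<omega>. (\<xi> \<omega>, \<phi> (\<xi> \<omega>)))) \<xi> \<eta> \<gamma> \<zeta> \<phi> DH) \<le> 0"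
    unfolding \<rho>_eq
  proof (intro allI impI)
    fix DH assume adm: "admissible_LD M1 (HhatEx c1 c2 c3 b1 b2 f1) \<rho> DH"
    have DHl: "lions_deriv M1 (HhatEx c1 c2 c3 b1 b2 f1 x p) \<rho> (DH x p)" for x p
      using adm unfolding admissible_LD_def by blast
    have DHm: "(\<lambda>(x, p, y). DH x p y) \<in> borel_measurable borel"
      using adm unfolding admissible_LD_def by blast
    have DHdx: "(\<lambda>x'. DH x' p y) differentiable (at x)" for x p y
      using adm unfolding admissible_LD_def by blast
    have DHdp: "(\<lambda>p'. DH x p' y) differentiable (at p)" for x p y
      using adm unfolding admissible_LD_def by blast
    have Gm: "(\<lambda>(x, p, y). G x p y) \<in> borel_measurable borel"
      using admG unfolding admissible_LD_def by blast
    have Gdx: "(\<lambda>x'. G x' p y) differentiable (at x)" for x p y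
      using admG unfolding admissible_LD_def by blast
    have Gdp: "(\<lambda>p'. G x p' y) differentiable (at p)" for x p y
      using admG unfolding admissible_LD_def by blast
    have AEx: "AE \<omega> in M1. DH x p (X0 \<omega>) = G x p (X0 \<omega>)" for x p
      by (rule lions_unique[OF M1 LX0]) (use DHl lG in \<open>simp_all add: \<rho>_def\<close>)
    define P where "P z \<longleftrightarrow> (\<forall>n::nat.
         DH (\<xi> (fst z) + inverse (real (Suc n))) (\<phi> (\<xi> (fst z))) (X0 (snd z))
           = G (\<xi> (fst z) + inverse (real (Suc n))) (\<phi> (\<xi> (fst z))) (X0 (snd z)) \<and>
         DH (\<xi> (fst z)) (\<phi> (\<xi> (fst z)) + inverse (real (Suc n))) (X0 (snd z))
           = G (\<xi> (fst z)) (\<phi> (\<xi> (fst z)) + inverse (real (Suc n))) (X0 (snd z))) \<and>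
         DH (\<xi> (fst z)) (\<phi> (\<xi> (fst z))) (X0 (snd z)) = G (\<xi> (fst z)) (\<phi> (\<xi> (fst z))) (X0 (snd z))" for z
    have Pm: "{z \<in> space (M1 \<Otimes>\<^sub>M M1). P z} \<in> sets (M1 \<Otimes>\<^sub>M M1)"
      unfolding P_def
      by (intro sets.sets_Collect_conj sets.sets_Collect_countable_All measurable_equality_set
          DH_comp[OF DHm] DH_comp[OF Gm]) measurable
    have AEP: "AE z in M1 \<Otimes>\<^sub>M M1. P z"
    proof (rule P.AE_pair_measure[OF Pm])
      show "AE \<omega> in M1. AE \<omega>' in M1. P (\<omega>, \<omega>')"
      proof (rule AE_I2)
        fix \<omega>
        show "AE \<omega>' in M1. P (\<omega>, \<omega>')"
          unfolding P_def fst_conv snd_conv AE_conj_iff AE_all_countable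
          using AEx by blast
      qed
    qed
    define Iexp where "Iexp z = (- (\<zeta> (fst z))\<^sup>2) * 1
        + (- (c2 * \<eta> (fst z) + D1 * (\<gamma> (fst z) - \<zeta> (fst z)))) * \<eta> (snd z)
        + (- (?k3 * \<eta> (fst z) + (- ?k + ?cb * D2) * (\<gamma> (fst z) - \<zeta> (fst z)))) * (\<gamma> (snd z) + \<zeta> (snd z))" for z
    have Ieq: "integrandLLH (HhatEx c1 c2 c3 b1 b2 f1) \<rho> \<xi> \<eta> \<gamma> \<zeta> \<phi> DH z = Iexp z" if Pz: "P z" for z
    proof -
      obtain \<omega> \<omega>' where z: "z = (\<omega>, \<omega>')" by (cases z)
      define x where "x = \<xi> \<omega>"
      define p where "p = \<phi> x"
      define y' where "y' = (\<xi> \<omega>', \<phi> (\<xi> \<omega>'))"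
      have P1: "\<And>n. DH (x + inverse (real (Suc n))) p y' = G (x + inverse (real (Suc n))) p y'"
        and P2: "\<And>n. DH x (p + inverse (real (Suc n))) y' = G x (p + inverse (real (Suc n))) y'"
        and P3: "DH x p y' = G x p y'"
        using Pz unfolding P_def z x_def p_def y'_def X0_def by auto
      have ex: "deriv (\<lambda>x'. fst (DH x' p y')) x = deriv (\<lambda>x'. fst (G x' p y')) x"
               "deriv (\<lambda>x'. snd (DH x' p y')) x = deriv (\<lambda>x'. snd (G x' p y')) x"
        by (rule deriv_agree[OF DHdx Gdx P3 P1])+
      have ep: "deriv (\<lambda>p'. fst (DH x p' y')) p = deriv (\<lambda>p'. fst (G x p' y')) p"
               "deriv (\<lambda>p'. snd (DH x p' y')) p = deriv (\<lambda>p'. snd (G x p' y')) p"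
        by (rule deriv_agree[OF DHdp Gdp P3 P2])+
      have g1: "deriv (\<lambda>x'. fst (G x' p y')) x = c2"
        unfolding G_def by (rule DERIV_imp_deriv) (auto intro!: derivative_eq_intros)
      have g2: "deriv (\<lambda>x'. snd (G x' p y')) x = ?k3"
        unfolding G_def by (rule DERIV_imp_deriv) (use c1 in \<open>auto intro!: derivative_eq_intros\<close>)
      have g3: "deriv (\<lambda>p'. fst (G x p' y')) p = D1"
        unfolding G_def by (rule DERIV_imp_deriv) (auto intro!: derivative_eq_intros)
      have gen: "deriv (\<lambda>p'. - (kk * m2 + p') * kk + p' * cbb * D2 + k3' * x) p = - kk + cbb * D2" for kk cbb k3'
        by (rule DERIV_imp_deriv) (auto intro!: derivative_eq_intros simp: algebra_simps)
      have g4: "deriv (\<lambda>p'. snd (G x p' y')) p = - ?k + ?cb * D2"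
        unfolding G_def snd_conv by (rule gen)
      have hpp: "deriv (deriv (\<lambda>p'. HhatEx c1 c2 c3 b1 b2 f1 x p' \<rho>)) p = -1"
        unfolding HhatEx_Fh by (rule Hpp_Fh)
      show ?thesis
        unfolding integrandLLH_def z Let_def case_prod_conv x_def[symmetric] p_def[symmetric] y'_def[symmetric]
        unfolding ex ep g1 g2 g3 g4 hpp Iexp_def fst_conv snd_conv
        by (simp add: algebra_simps power2_eq_square)
    qed
    have AEI: "AE z in M1 \<Otimes>\<^sub>M M1. integrandLLH (HhatEx c1 c2 c3 b1 b2 f1) \<rho> \<xi> \<eta> \<gamma> \<zeta> \<phi> DH z = Iexp z"
      using AEP by (rule AE_mp) (auto intro: Ieq)
    have iE: "integrable M1 \<eta>" "integrable M1 \<gamma>" "integrable M1 \<zeta>"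
      using L2_int[OF M1] Le Lg Lz by auto
    have iZ2: "integrable M1 (\<lambda>\<omega>. (\<zeta> \<omega>)\<^sup>2)" using L2_sq[OF Lz] .
    define A where "A \<omega> = - (\<zeta> \<omega>)\<^sup>2" for \<omega>
    define B2 where "B2 \<omega> = - (c2 * \<eta> \<omega> + D1 * (\<gamma> \<omega> - \<zeta> \<omega>))" for \<omega>
    define B3 where "B3 \<omega> = - (?k3 * \<eta> \<omega> + (- ?k + ?cb * D2) * (\<gamma> \<omega> - \<zeta> \<omega>))" for \<omega>
    define S where "S \<omega> = \<gamma> \<omega> + \<zeta> \<omega>" for \<omega>
    have iA: "integrable M1 A" unfolding A_def using iZ2 by simp
    have iB2: "integrable M1 B2" unfolding B2_def using iE by simp
    have iB3: "integrable M1 B3" unfolding B3_def using iE by simp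
    have iS: "integrable M1 S" unfolding S_def using iE by simp
    have i1: "integrable M1 (\<lambda>_. 1::real)" by simp
    have Iexp_eq: "Iexp = (\<lambda>z. A (fst z) * 1 + B2 (fst z) * \<eta> (snd z) + B3 (fst z) * S (snd z))"
      unfolding Iexp_def A_def B2_def B3_def S_def by (rule ext) simp
    have intIexp: "integral\<^sup>L (M1 \<Otimes>\<^sub>M M1) Iexp
        = integral\<^sup>L M1 A * 1 + integral\<^sup>L M1 B2 * integral\<^sup>L M1 \<eta> + integral\<^sup>L M1 B3 * integral\<^sup>L M1 S"
      unfolding Iexp_eq
      using prod_integral[OF M1 iA i1] prod_integral[OF M1 iB2 iE(1)] prod_integral[OF M1 iB3 iS]
      by (simp add: prob_space)
    define e where "e = integral\<^sup>L M1 \<eta>"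
    define a where "a = integral\<^sup>L M1 \<gamma>"
    define zz where "zz = integral\<^sup>L M1 \<zeta>"
    define SS where "SS = integral\<^sup>L M1 (\<lambda>\<omega>. (\<zeta> \<omega>)\<^sup>2)"
    have EA: "integral\<^sup>L M1 A = - SS" unfolding A_def SS_def by simp
    have EB2: "integral\<^sup>L M1 B2 = - (c2 * e + D1 * (a - zz))"
      unfolding B2_def e_def a_def zz_def using iE by simp
    have EB3: "integral\<^sup>L M1 B3 = - (?k3 * e + (- ?k + ?cb * D2) * (a - zz))"
      unfolding B3_def e_def a_def zz_def using iE by simp
    have ES: "integral\<^sup>L M1 S = a + zz" unfolding S_def a_def zz_def using iE by simp
    have SSz: "zz\<^sup>2 \<le> SS" unfolding zz_def SS_def by (rule sq_expectation_le[OF iE(3) iZ2])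
    have q: "0 \<le> (1 - (?cb * D2 - ?k)) * zz\<^sup>2 + (?cb * D2 - ?k) * a\<^sup>2 + c2 * e\<^sup>2
            + (?k3 - D1) * zz * e + (?k3 + D1) * a * e"
      using psd_quad[OF psd[of m1 "?cb * m2"], of zz a e] unfolding D1_def D2_def .
    have le: "integral\<^sup>L (M1 \<Otimes>\<^sub>M M1) Iexp \<le> 0"
    proof -
      have gen2: "- SS * 1 + - (c2 * e + D1 * (a - zz)) * e + - (k3' * e + (- kk + cbb * D2) * (a - zz)) * (a + zz)
          = - (SS - zz\<^sup>2) - ((1 - (cbb * D2 - kk)) * zz\<^sup>2 + (cbb * D2 - kk) * a\<^sup>2 + c2 * e\<^sup>2
            + (k3' - D1) * zz * e + (k3' + D1) * a * e)" for kk cbb k3'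
        by (simp add: algebra_simps power2_eq_square)
      have "integral\<^sup>L (M1 \<Otimes>\<^sub>M M1) Iexp = - (SS - zz\<^sup>2) - ((1 - (?cb * D2 - ?k)) * zz\<^sup>2 + (?cb * D2 - ?k) * a\<^sup>2 + c2 * e\<^sup>2
            + (?k3 - D1) * zz * e + (?k3 + D1) * a * e)"
        unfolding intIexp EA EB2 EB3 ES e_def[symmetric] by (rule gen2)
      then show ?thesis using q SSz by linarith
    qed
    define II where "II = integrandLLH (HhatEx c1 c2 c3 b1 b2 f1) \<rho> \<xi> \<eta> \<gamma> \<zeta> \<phi> DH"
    have Im: "Iexp \<in> borel_measurable (M1 \<Otimes>\<^sub>M M1)" unfolding Iexp_def by measurable
    have "integral\<^sup>L (M1 \<Otimes>\<^sub>M M1) II = integral\<^sup>L (M1 \<Otimes>\<^sub>M M1) Iexp \<or> integral\<^sup>L (M1 \<Otimes>\<^sub>M M1) II = 0"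
    proof (cases "II \<in> borel_measurable (M1 \<Otimes>\<^sub>M M1)")
      case True
      have "integral\<^sup>L (M1 \<Otimes>\<^sub>M M1) II = integral\<^sup>L (M1 \<Otimes>\<^sub>M M1) Iexp"
        using True Im AEI unfolding II_def by (intro integral_cong_AE) auto
      then show ?thesis by blast
    next
      case False
      then have "\<not> integrable (M1 \<Otimes>\<^sub>M M1) II" by auto
      then show ?thesis by (simp add: not_integrable_integral_eq)
    qed
    then show "integral\<^sup>L (M1 \<Otimes>\<^sub>M M1) (integrandLLH (HhatEx c1 c2 c3 b1 b2 f1) \<rho> \<xi> \<eta> \<gamma> \<zeta> \<phi> DH) \<le> 0"
      using le unfolding II_def by linarith
  qed
qed

theorem mainTheorem4:
  fixes M :: "'w measure" and M1 :: "'v measure"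
    and c1 c2 c3 :: real
    and b1 :: "real \<times> real \<Rightarrow> real" and D1b1 D2b1 :: "real \<times> real \<Rightarrow> real"
    and b2 f1 :: "real \<Rightarrow> real"
  assumes M: "prob_space M"
    and M1: "prob_space M1" "atomless M1"
    and c1: "0 < c1" "c1 < 1" and c2: "0 < c2" and c3: "0 < c3"
    and b1_C1: "\<And>m. (b1 has_derivative (\<lambda>h. D1b1 m * fst h + D2b1 m * snd h)) (at m)"
               "continuous_on UNIV D1b1" "continuous_on UNIV D2b1"
    and b2_C1: "\<And>x. b2 differentiable (at x)" "continuous_on UNIV (deriv b2)"
    and f1_C1: "\<And>x. f1 differentiable (at x)" "continuous_on UNIV (deriv f1)"
    and psd: "\<And>m1 m2. psd3 (matEx c1 c2 c3 (D1b1 (m1, m2)) (D2b1 (m1, m2)))"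
  shows "assumption_F M (bEx b1 b2) (fEx c1 c2 c3 f1)
    \<and> (\<forall>\<xi> \<eta>. L2 M \<xi> \<and> L2_sigma M \<xi> \<eta> \<longrightarrow>
          PhiF M (bEx b1 b2) (fEx c1 c2 c3 f1) \<xi> \<eta>
            = law M (\<lambda>\<omega>. (\<xi> \<omega>, c1 / (1 - c1) * integral\<^sup>L M \<eta> + \<eta> \<omega>))
        \<and> (\<forall>x p. Ham (bEx b1 b2) (fEx c1 c2 c3 f1) x p (PhiF M (bEx b1 b2) (fEx c1 c2 c3 f1) \<xi> \<eta>)
                 = HhatEx c1 c2 c3 b1 b2 f1 x p (law M (\<lambda>\<omega>. (\<xi> \<omega>, \<eta> \<omega>)))))
    \<and> LLH M1 (HhatEx c1 c2 c3 b1 b2 f1)"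
proof -
  have "assumption_F M (bEx b1 b2) (fEx c1 c2 c3 f1)
    \<and> (\<forall>\<xi> \<eta>. L2 M \<xi> \<and> L2_sigma M \<xi> \<eta> \<longrightarrow>
          PhiF M (bEx b1 b2) (fEx c1 c2 c3 f1) \<xi> \<eta>
            = law M (\<lambda>\<omega>. (\<xi> \<omega>, c1 / (1 - c1) * integral\<^sup>L M \<eta> + \<eta> \<omega>))
        \<and> (\<forall>x p. Ham (bEx b1 b2) (fEx c1 c2 c3 f1) x p (PhiF M (bEx b1 b2) (fEx c1 c2 c3 f1) \<xi> \<eta>)
                 = HhatEx c1 c2 c3 b1 b2 f1 x p (law M (\<lambda>\<omega>. (\<xi> \<omega>, \<eta> \<omega>)))))"
    by (rule part12[OF M c1])
  moreover have "LLH M1 (HhatEx c1 c2 c3 b1 b2 f1)"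
    by (rule LLH_part[OF M1(1) c1(2) b1_C1(1) psd])
  ultimately show ?thesis by blast
qed

end
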